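(* Let $\theta_+,\theta_-$ be anticommuting (Grassmann-odd) coordinates, let $\eta=\eta(x_+)$ be a fermionic (Grassmann-odd) function of $x_+$ and $\eta^\dagger=\eta^\dagger(x_-)$ its conjugate, a fermionic function of $x_-$, and set $T_1=\theta_+\eta$, $T_2=\theta_-\eta^\dagger$. Define the differential operator $$\mathcal{D}= iT_1\,\partial_+ + iT_2\,\partial_- - T_1T_2\,\partial_+\partial_- ,$$ where $\partial_\pm=\partial/\partial x_\pm$. Let $B(x_+,x_-)=(b_{jk})$ be an $M\times M$ matrix of bosonic (Grassmann-even) smooth functions of $(x_+,x_-)$, and let $(1+\mathcal{D})B$ denote the matrix with entries $(1+\mathcal{D})b_{jk}$. Then $$\det\big[(1+\mathcal{D})B(x_+,x_-)\big]=(1+\mathcal{D})\det\big[B(x_+,x_-)\big].$$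
   Context: Here $x_-$ is the complex conjugate variable of $x_+$. The quantities $T_1,T_2$ are products of two Grassmann-odd objects, hence Grassmann-even, commuting with everything, and satisfy $T_1^2=T_2^2=0$. *)

theory Defs
  imports "HOL-Analysis.Analysis"
begin

text \<open>Wirtinger derivatives: x_+ = z, x_- = cnj z, so
  d/dx_+ = (d/dx - i d/dy)/2 and d/dx_- = (d/dx + i d/dy)/2.\<close>

definition dplus :: "(complex \<Rightarrow> complex) \<Rightarrow> complex \<Rightarrow> complex" where
  "dplus f z = (frechet_derivative f (at z) 1 - \<i> * frechet_derivative f (at z) \<i>) / 2"

definition dminus :: "(complex \<Rightarrow> complex) \<Rightarrow> complex \<Rightarrow> complex" where
  "dminus f z = (frechet_derivative f (at z) 1 + \<i> * frechet_derivative f (at z) \<i>) / 2"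

definition iter_wirt :: "bool list \<Rightarrow> (complex \<Rightarrow> complex) \<Rightarrow> complex \<Rightarrow> complex" where
  "iter_wirt ops f = foldr (\<lambda>b g. if b then dplus g else dminus g) ops f"

definition smooth :: "(complex \<Rightarrow> complex) \<Rightarrow> bool" where
  "smooth f \<longleftrightarrow> (\<forall>ops. iter_wirt ops f differentiable_on UNIV)"

text \<open>Grassmann-even algebra: a commutative ring 'a with a ring embedding
  emb of the complex numbers. (1 + D) applied to a bosonic function f at the point
  x_+ = z, x_- = cnj z, where t1 = T_1(x_+), t2 = T_2(x_-).\<close>
definition onepD :: "(complex \<Rightarrow> 'a::comm_ring_1) \<Rightarrow> 'a \<Rightarrow> 'a \<Rightarrow> (complex \<Rightarrow> complex) \<Rightarrow> complex \<Rightarrow> 'a" where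
  "onepD emb t1 t2 f z =
     emb (f z) + emb \<i> * t1 * emb (dplus f z) + emb \<i> * t2 * emb (dminus f z)
     - t1 * t2 * emb (dplus (dminus f) z)"

end

theory Submission
  imports Defs
begin

lemma fd_mult:
  fixes f g :: "complex \<Rightarrow> complex"
  assumes "f differentiable at z" "g differentiable at z"
  shows "frechet_derivative (\<lambda>w. f w * g w) (at z) h
       = f z * frechet_derivative g (at z) h + frechet_derivative f (at z) h * g z"
proof -
  have "((\<lambda>w. f w * g w) has_derivative
     (\<lambda>h. f z * frechet_derivative g (at z) h + frechet_derivative f (at z) h * g z)) (at z)"
    by (rule has_derivative_mult; use assms frechet_derivative_works in blast)
  from frechet_derivative_at[OF this] show ?thesis by metis
qed

lemma fd_add:
  fixes f g :: "complex \<Rightarrow> complex"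
  assumes "f differentiable at z" "g differentiable at z"
  shows "frechet_derivative (\<lambda>w. f w + g w) (at z) h
       = frechet_derivative f (at z) h + frechet_derivative g (at z) h"
proof -
  have "((\<lambda>w. f w + g w) has_derivative
     (\<lambda>h. frechet_derivative f (at z) h + frechet_derivative g (at z) h)) (at z)"
    using has_derivative_add assms frechet_derivative_works by blast
  from frechet_derivative_at[OF this] show ?thesis by metis
qed

lemma fd_const: "frechet_derivative (\<lambda>w. c) (at z) h = 0"
proof -
  have "((\<lambda>w. c) has_derivative (\<lambda>h. 0)) (at z)" by (rule has_derivative_const)
  from frechet_derivative_at[OF this] show ?thesis by metis
qed

lemma dplus_mult: "f differentiable at z \<Longrightarrow> g differentiable at z \<Longrightarrow>
  dplus (\<lambda>w. f w * g w) z = dplus f z * g z + f z * dplus g z"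
  unfolding dplus_def by (simp add: fd_mult field_simps)

lemma dminus_mult: "f differentiable at z \<Longrightarrow> g differentiable at z \<Longrightarrow>
  dminus (\<lambda>w. f w * g w) z = dminus f z * g z + f z * dminus g z"
  unfolding dminus_def by (simp add: fd_mult field_simps)

lemma dplus_add: "f differentiable at z \<Longrightarrow> g differentiable at z \<Longrightarrow>
  dplus (\<lambda>w. f w + g w) z = dplus f z + dplus g z"
  unfolding dplus_def by (simp add: fd_add field_simps)

lemma dminus_add: "f differentiable at z \<Longrightarrow> g differentiable at z \<Longrightarrow>
  dminus (\<lambda>w. f w + g w) z = dminus f z + dminus g z"
  unfolding dminus_def by (simp add: fd_add field_simps)

lemma dplus_const: "dplus (\<lambda>w. c) z = 0"
  unfolding dplus_def by (simp add: fd_const)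

lemma dminus_const: "dminus (\<lambda>w. c) z = 0"
  unfolding dminus_def by (simp add: fd_const)

definition CC :: "(complex \<Rightarrow> complex) \<Rightarrow> bool" where
  "CC f \<longleftrightarrow> (\<forall>x. f differentiable at x) \<and> (\<forall>x. dminus f differentiable at x)"

lemma dminus_mult_fun: "CC f \<Longrightarrow> CC g \<Longrightarrow>
  dminus (\<lambda>w. f w * g w) = (\<lambda>w. dminus f w * g w + f w * dminus g w)"
  by (rule ext, rule dminus_mult) (auto simp: CC_def)

lemma dminus_add_fun: "CC f \<Longrightarrow> CC g \<Longrightarrow>
  dminus (\<lambda>w. f w + g w) = (\<lambda>w. dminus f w + dminus g w)"
  by (rule ext, rule dminus_add) (auto simp: CC_def)

lemma dminus_const_fun: "dminus (\<lambda>w. c) = (\<lambda>w. 0)"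
  by (rule ext, rule dminus_const)

lemma CC_mult: "CC f \<Longrightarrow> CC g \<Longrightarrow> CC (\<lambda>w. f w * g w)"
  unfolding CC_def
  by (simp add: dminus_mult_fun[unfolded CC_def])

lemma CC_add: "CC f \<Longrightarrow> CC g \<Longrightarrow> CC (\<lambda>w. f w + g w)"
  unfolding CC_def
  by (simp add: dminus_add_fun[unfolded CC_def])

lemma CC_const: "CC (\<lambda>w. c)"
  unfolding CC_def by (simp add: dminus_const_fun)

lemma CC_sum: "finite S \<Longrightarrow> (\<And>i. i \<in> S \<Longrightarrow> CC (h i)) \<Longrightarrow> CC (\<lambda>w. \<Sum>i\<in>S. h i w)"
  by (induction S rule: finite_induct) (auto intro: CC_add CC_const)

lemma CC_prod: "finite S \<Longrightarrow> (\<And>i. i \<in> S \<Longrightarrow> CC (h i)) \<Longrightarrow> CC (\<lambda>w. \<Prod>i\<in>S. h i w)"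
  by (induction S rule: finite_induct) (auto intro: CC_mult CC_const)

lemma emb_facts:
  fixes emb :: "complex \<Rightarrow> 'a::comm_ring_1"
  assumes emb_1: "emb 1 = 1"
    and emb_add: "\<And>a b. emb (a + b) = emb a + emb b"
    and emb_mult: "\<And>a b. emb (a * b) = emb a * emb b"
  shows "emb 0 = 0" "\<And>a. emb (- a) = - emb a" "emb \<i> * emb \<i> = -1"
    "\<And>k. emb (of_int k) = of_int k"
proof -
  have "emb 0 = emb 0 + emb 0" using emb_add[of 0 0] by simp
  then show e0: "emb 0 = 0" by simp
  show en: "\<And>a. emb (- a) = - emb a"
  proof -
    fix a
    have "emb (- a) + emb a = 0" using emb_add[of "-a" a] e0 by simp
    then show "emb (- a) = - emb a" by (simp add: eq_neg_iff_add_eq_0)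
  qed
  show "emb \<i> * emb \<i> = -1" using emb_mult[of \<i> \<i>] en[of 1] emb_1 by simp
  show "\<And>k. emb (of_int k) = of_int k"
  proof -
    fix k :: int
    have "emb (of_nat n) = of_nat n" for n
      by (induction n) (simp_all add: e0 emb_add emb_1)
    have "k = int (nat k) \<or> k = - int (nat (-k))" by arith
    then show "emb (of_int k) = of_int k"
    proof
      assume "k = int (nat k)"
      then show ?thesis using \<open>\<And>n. emb (of_nat n) = of_nat n\<close>
        by (metis of_int_of_nat_eq)
    next
      assume "k = - int (nat (-k))"
      then show ?thesis using \<open>\<And>n. emb (of_nat n) = of_nat n\<close> en
        by (metis of_int_minus of_int_of_nat_eq)
    qed
  qed
qed

lemma ring_id:
  fixes t1 t2 I F Fp Fm Fpm G Gp Gm Gpm :: "'a::comm_ring_1"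
  assumes "t1*t1=0" "t2*t2=0" "I*I = -1"
  shows "F*G + I*t1*(Fp*G + F*Gp) + I*t2*(Fm*G+F*Gm)
     - t1*t2*((Fpm*G + Fm*Gp) + (Fp*Gm + F*Gpm))
   = (F + I*t1*Fp + I*t2*Fm - t1*t2*Fpm)*(G + I*t1*Gp + I*t2*Gm - t1*t2*Gpm)"
proof -
  have "(F + I*t1*Fp + I*t2*Fm - t1*t2*Fpm)*(G + I*t1*Gp + I*t2*Gm - t1*t2*Gpm)
    = (F*G + I*t1*(Fp*G + F*Gp) + I*t2*(Fm*G+F*Gm)
     - t1*t2*((Fpm*G + Fm*Gp) + (Fp*Gm + F*Gpm)))
     + (t1*t1)*(I*I*Fp*Gp - I*t2*(Fp*Gpm+Fpm*Gp) + t2*t2*Fpm*Gpm)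
     + (t2*t2)*(I*I*Fm*Gm - I*t1*(Fm*Gpm+Fpm*Gm))
     + (I*I+1)*(t1*t2*(Fp*Gm+Fm*Gp))"
    by (simp add: algebra_simps)
  then show ?thesis using assms by simp
qed

lemma onepD_mult:
  fixes emb :: "complex \<Rightarrow> 'a::comm_ring_1"
  assumes emb_1: "emb 1 = 1"
    and emb_add: "\<And>a b. emb (a + b) = emb a + emb b"
    and emb_mult: "\<And>a b. emb (a * b) = emb a * emb b"
    and t1: "t1 * t1 = 0" and t2: "t2 * t2 = 0"
    and f: "CC f" and g: "CC g"
  shows "onepD emb t1 t2 (\<lambda>w. f w * g w) z = onepD emb t1 t2 f z * onepD emb t1 t2 g z"
proof -
  have df: "\<And>x. f differentiable at x" "\<And>x. dminus f differentiable at x"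
    and dg: "\<And>x. g differentiable at x" "\<And>x. dminus g differentiable at x"
    using f g by (auto simp: CC_def)
  have pm: "dplus (dminus (\<lambda>w. f w * g w)) z =
     (dplus (dminus f) z * g z + dminus f z * dplus g z) + (dplus f z * dminus g z + f z * dplus (dminus g) z)"
    unfolding dminus_mult_fun[OF f g]
    by (subst dplus_add) (auto intro!: differentiable_mult simp: df dg dplus_mult)
  have ii: "emb \<i> * emb \<i> = -1" using emb_facts[where emb=emb, OF emb_1 emb_add emb_mult] by simp
  show ?thesis
    unfolding onepD_def pm dplus_mult[OF df(1) dg(1)] dminus_mult[OF df(1) dg(1)]
    unfolding emb_add emb_mult
    by (rule ring_id[OF t1 t2 ii])
qed

lemma onepD_add:
  fixes emb :: "complex \<Rightarrow> 'a::comm_ring_1"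
  assumes emb_add: "\<And>a b. emb (a + b) = emb a + emb b"
    and f: "CC f" and g: "CC g"
  shows "onepD emb t1 t2 (\<lambda>w. f w + g w) z = onepD emb t1 t2 f z + onepD emb t1 t2 g z"
proof -
  have df: "\<And>x. f differentiable at x" "\<And>x. dminus f differentiable at x"
    and dg: "\<And>x. g differentiable at x" "\<And>x. dminus g differentiable at x"
    using f g by (auto simp: CC_def)
  show ?thesis
    unfolding onepD_def dminus_add_fun[OF f g] dplus_add[OF df(2) dg(2)]
      dplus_add[OF df(1) dg(1)] dminus_add[OF df(1) dg(1)] emb_add
    by (simp add: algebra_simps)
qed

lemma onepD_const:
  fixes emb :: "complex \<Rightarrow> 'a::comm_ring_1"
  assumes "emb 0 = 0"
  shows "onepD emb t1 t2 (\<lambda>w. c) z = emb c"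
  unfolding onepD_def dminus_const_fun dplus_const dminus_const using assms by simp

lemma onepD_sum:
  fixes emb :: "complex \<Rightarrow> 'a::comm_ring_1"
  assumes emb_1: "emb 1 = 1"
    and emb_add: "\<And>a b. emb (a + b) = emb a + emb b"
    and emb_mult: "\<And>a b. emb (a * b) = emb a * emb b"
  shows "finite S \<Longrightarrow> (\<And>i. i \<in> S \<Longrightarrow> CC (h i)) \<Longrightarrow>
    onepD emb t1 t2 (\<lambda>w. \<Sum>i\<in>S. h i w) z = (\<Sum>i\<in>S. onepD emb t1 t2 (h i) z)"
proof (induction S rule: finite_induct)
  case empty
  have e0: "emb 0 = 0" using emb_facts[where emb=emb, OF emb_1 emb_add emb_mult] by simp
  then show ?case using onepD_const[where emb=emb, OF e0] by simp
next
  case (insert x F)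
  have "onepD emb t1 t2 (\<lambda>w. \<Sum>i\<in>insert x F. h i w) z
      = onepD emb t1 t2 (\<lambda>w. h x w + (\<Sum>i\<in>F. h i w)) z"
    using insert(1,2) by simp
  also have "\<dots> = onepD emb t1 t2 (h x) z + onepD emb t1 t2 (\<lambda>w. \<Sum>i\<in>F. h i w) z"
  proof -
    have "CC (h x)" using insert by auto
    moreover have "CC (\<lambda>w. \<Sum>i\<in>F. h i w)" by (rule CC_sum) (use insert in auto)
    ultimately show ?thesis by (rule onepD_add[where emb=emb and f="h x" and g="\<lambda>w. \<Sum>i\<in>F. h i w", OF emb_add])
  qed
  finally show ?case using insert by simp
qed

lemma onepD_prod:
  fixes emb :: "complex \<Rightarrow> 'a::comm_ring_1"
  assumes emb_1: "emb 1 = 1"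
    and emb_add: "\<And>a b. emb (a + b) = emb a + emb b"
    and emb_mult: "\<And>a b. emb (a * b) = emb a * emb b"
    and t1: "t1 * t1 = 0" and t2: "t2 * t2 = 0"
  shows "finite S \<Longrightarrow> (\<And>i. i \<in> S \<Longrightarrow> CC (h i)) \<Longrightarrow>
    onepD emb t1 t2 (\<lambda>w. \<Prod>i\<in>S. h i w) z = (\<Prod>i\<in>S. onepD emb t1 t2 (h i) z)"
proof (induction S rule: finite_induct)
  case empty
  have e0: "emb 0 = 0" using emb_facts[where emb=emb, OF emb_1 emb_add emb_mult] by simp
  then show ?case using onepD_const[where emb=emb, OF e0] emb_1 by simp
next
  case (insert x F)
  have "onepD emb t1 t2 (\<lambda>w. \<Prod>i\<in>insert x F. h i w) z
      = onepD emb t1 t2 (\<lambda>w. h x w * (\<Prod>i\<in>F. h i w)) z"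
    using insert(1,2) by simp
  also have "\<dots> = onepD emb t1 t2 (h x) z * onepD emb t1 t2 (\<lambda>w. \<Prod>i\<in>F. h i w) z"
  proof -
    have "CC (h x)" using insert by auto
    moreover have "CC (\<lambda>w. \<Prod>i\<in>F. h i w)" by (rule CC_prod) (use insert in auto)
    ultimately show ?thesis by (rule onepD_mult[where emb=emb and f="h x" and g="\<lambda>w. \<Prod>i\<in>F. h i w", OF emb_1 emb_add emb_mult t1 t2])
  qed
  finally show ?case using insert by simp
qed

lemma smooth_CC: "smooth f \<Longrightarrow> CC f"
proof -
  assume "smooth f"
  then have "iter_wirt [] f differentiable_on UNIV" "iter_wirt [False] f differentiable_on UNIV"
    unfolding smooth_def by blast+
  then show "CC f" unfolding CC_def iter_wirt_def by (simp add: differentiable_on_def)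
qed

theorem lemma1:
  fixes emb :: "complex \<Rightarrow> 'a::comm_ring_1"
    and T1 T2 :: "complex \<Rightarrow> 'a"
    and B :: "complex \<Rightarrow> complex ^ 'n ^ 'n"
  assumes emb_1: "emb 1 = 1"
    and emb_add: "\<And>a b. emb (a + b) = emb a + emb b"
    and emb_mult: "\<And>a b. emb (a * b) = emb a * emb b"
    and T1_nil: "\<And>w. T1 w * T1 w = 0"
    and T2_nil: "\<And>w. T2 w * T2 w = 0"
    and smooth_B: "\<And>j k. smooth (\<lambda>w. B w $ j $ k)"
  shows "det (\<chi> j k. onepD emb (T1 z) (T2 (cnj z)) (\<lambda>w. B w $ j $ k) z)
         = onepD emb (T1 z) (T2 (cnj z)) (\<lambda>w. det (B w)) z"
proof -
  let ?P = "\<lambda>f. onepD emb (T1 z) (T2 (cnj z)) f z"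
  have CB: "\<And>j k. CC (\<lambda>w. B w $ j $ k)" using smooth_B smooth_CC by blast
  have CP: "CC (\<lambda>w. \<Prod>i\<in>UNIV. B w $ i $ p i)" for p :: "'n \<Rightarrow> 'n"
    by (rule CC_prod) (auto intro: CB)
  have CT: "CC (\<lambda>w. of_int (sign p) * (\<Prod>i\<in>UNIV. B w $ i $ p i))" for p :: "'n \<Rightarrow> 'n"
    by (rule CC_mult[OF CC_const CP])
  have "?P (\<lambda>w. det (B w)) =
      ?P (\<lambda>w. \<Sum>p\<in>{p. p permutes UNIV}. of_int (sign p) * (\<Prod>i\<in>UNIV. B w $ i $ p i))"
    unfolding det_def by simp
  also have "\<dots> = (\<Sum>p\<in>{p. p permutes UNIV}. ?P (\<lambda>w. of_int (sign p) * (\<Prod>i\<in>UNIV. B w $ i $ p i)))"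
    by (rule onepD_sum[where emb=emb, OF emb_1 emb_add emb_mult]) (auto intro: CT)
  also have "\<dots> = (\<Sum>p\<in>{p. p permutes UNIV}. of_int (sign p) * (\<Prod>i\<in>UNIV. ?P (\<lambda>w. B w $ i $ p i)))"
  proof (rule sum.cong[OF refl])
    fix p :: "'n \<Rightarrow> 'n"
    have "?P (\<lambda>w. of_int (sign p) * (\<Prod>i\<in>UNIV. B w $ i $ p i))
        = ?P (\<lambda>w. of_int (sign p)) * ?P (\<lambda>w. \<Prod>i\<in>UNIV. B w $ i $ p i)"
      by (rule onepD_mult[where emb=emb, OF emb_1 emb_add emb_mult T1_nil T2_nil CC_const CP])
    also have "\<dots> = of_int (sign p) * (\<Prod>i\<in>UNIV. ?P (\<lambda>w. B w $ i $ p i))"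
      using onepD_const[where emb=emb, OF emb_facts(1)[where emb=emb, OF emb_1 emb_add emb_mult]]
        emb_facts(4)[where emb=emb, OF emb_1 emb_add emb_mult]
        onepD_prod[where emb=emb, OF emb_1 emb_add emb_mult T1_nil T2_nil, of UNIV "\<lambda>i w. B w $ i $ p i"] CB
      by simp
    finally show "?P (\<lambda>w. of_int (sign p) * (\<Prod>i\<in>UNIV. B w $ i $ p i))
        = of_int (sign p) * (\<Prod>i\<in>UNIV. ?P (\<lambda>w. B w $ i $ p i))" .
  qed
  also have "\<dots> = det (\<chi> j k. ?P (\<lambda>w. B w $ j $ k))"
    unfolding det_def by simp
  finally show ?thesis by simp
qed

end
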